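(* Let $P=\{S_1,\ldots,S_n\}$ be a homothetic packing of $n$ squares with contact graph $G=([n],E)$, and let $\{i,j\},\{k,\ell\}\in E$ be two edges sharing no vertex. Then: (1) the interiors of $S_i\cup S_j$ and $S_k\cup S_\ell$ are disjoint; (2) if the closed segments $[p_i,p_j]$ and $[p_k,p_\ell]$ intersect, then the squares $S_i,S_j,S_k,S_\ell$ share a corner, the edges $\{i,j\},\{k,\ell\}$ lie in $E_x\cap E_y$, and the edges $\{i,k\},\{i,\ell\},\{j,k\},\{j,\ell\}$ lie in the symmetric difference $E_x\triangle E_y$.
   Context: Let $S=\{(x,y): -1\le x,y\le 1\}$. A homothetic packing of $n$ squares is a set $P=\{S_1,\ldots,S_n\}$ with $S_i=r_iS+p_i$, $r_i>0$, $p_i=(x_i,y_i)\in\mathbb{R}^2$, such that distinct squares have disjoint interiors. Its contact graph is $G=([n],E)$ where $\{i,j\}\in E$ iff $i\ne j$ and $S_i\cap S_j\ne\emptyset$. $E_x$ is the set of pairs $\{i,j\}\in E$ with $r_i+r_j=|x_i-x_j|\ge|y_i-y_j|$, and $E_y$ the set with $r_i+r_j=|y_i-y_j|\ge|x_i-x_j|$. $[p,q]$ denotes the closed line segment between $p$ and $q$. Four squares share a corner if they have a common point which is a corner of each of them. *)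

theory Defs
  imports "HOL-Analysis.Analysis"
begin

definition std_square :: "(real \<times> real) set" where
  "std_square = {(x, y). -1 \<le> x \<and> x \<le> 1 \<and> -1 \<le> y \<and> y \<le> 1}"

definition hsq :: "real \<Rightarrow> real \<times> real \<Rightarrow> (real \<times> real) set" where
  "hsq r p = (\<lambda>z. r *\<^sub>R z + p) ` std_square"

text \<open>Squares are indexed by {0..<n} (instead of [n] = {1..n}).\<close>
definition homothetic_packing :: "nat \<Rightarrow> (nat \<Rightarrow> real) \<Rightarrow> (nat \<Rightarrow> real \<times> real) \<Rightarrow> bool" where
  "homothetic_packing n r p \<longleftrightarrow>
     (\<forall>i<n. r i > 0) \<and>
     (\<forall>i<n. \<forall>j<n. i \<noteq> j \<longrightarrow> interior (hsq (r i) (p i)) \<inter> interior (hsq (r j) (p j)) = {})"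

definition contact_edge :: "nat \<Rightarrow> (nat \<Rightarrow> real) \<Rightarrow> (nat \<Rightarrow> real \<times> real) \<Rightarrow> nat \<Rightarrow> nat \<Rightarrow> bool" where
  "contact_edge n r p i j \<longleftrightarrow> i < n \<and> j < n \<and> i \<noteq> j \<and> hsq (r i) (p i) \<inter> hsq (r j) (p j) \<noteq> {}"

definition edge_x :: "nat \<Rightarrow> (nat \<Rightarrow> real) \<Rightarrow> (nat \<Rightarrow> real \<times> real) \<Rightarrow> nat \<Rightarrow> nat \<Rightarrow> bool" where
  "edge_x n r p i j \<longleftrightarrow> contact_edge n r p i j \<and>
     r i + r j = \<bar>fst (p i) - fst (p j)\<bar> \<and> \<bar>fst (p i) - fst (p j)\<bar> \<ge> \<bar>snd (p i) - snd (p j)\<bar>"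

definition edge_y :: "nat \<Rightarrow> (nat \<Rightarrow> real) \<Rightarrow> (nat \<Rightarrow> real \<times> real) \<Rightarrow> nat \<Rightarrow> nat \<Rightarrow> bool" where
  "edge_y n r p i j \<longleftrightarrow> contact_edge n r p i j \<and>
     r i + r j = \<bar>snd (p i) - snd (p j)\<bar> \<and> \<bar>snd (p i) - snd (p j)\<bar> \<ge> \<bar>fst (p i) - fst (p j)\<bar>"

definition corners :: "real \<Rightarrow> real \<times> real \<Rightarrow> (real \<times> real) set" where
  "corners r p = {(fst p + s * r, snd p + t * r) | s t. s \<in> {-1, 1} \<and> t \<in> {-1, 1}}"

definition share_corner :: "(nat \<Rightarrow> real) \<Rightarrow> (nat \<Rightarrow> real \<times> real) \<Rightarrow> nat set \<Rightarrow> bool" where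
  "share_corner r p I \<longleftrightarrow> (\<exists>c. \<forall>i\<in>I. c \<in> corners (r i) (p i))"

end

theory Submission imports Defs begin

lemma hsq_eq: assumes "r > 0"
  shows "hsq r p = {fst p - r .. fst p + r} \<times> {snd p - r .. snd p + r}"
proof
  show "hsq r p \<subseteq> {fst p - r .. fst p + r} \<times> {snd p - r .. snd p + r}"
  proof
    fix z assume "z \<in> hsq r p"
    then obtain u v where uv: "-1 \<le> u" "u \<le> 1" "-1 \<le> v" "v \<le> 1" "z = r *\<^sub>R (u,v) + p"
      unfolding hsq_def std_square_def by auto
    have "\<bar>u\<bar> \<le> 1" "\<bar>v\<bar> \<le> 1" using uv by auto
    then have "\<bar>r * u\<bar> \<le> r" "\<bar>r * v\<bar> \<le> r" using assms
      by (simp_all add: abs_mult mult_left_le)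
    then show "z \<in> {fst p - r .. fst p + r} \<times> {snd p - r .. snd p + r}" using uv by (cases p) (auto simp: abs_le_iff)
  qed
next
  show "{fst p - r .. fst p + r} \<times> {snd p - r .. snd p + r} \<subseteq> hsq r p"
  proof
    fix z assume z: "z \<in> {fst p - r .. fst p + r} \<times> {snd p - r .. snd p + r}"
    define u where "u = (fst z - fst p) / r"
    define v where "v = (snd z - snd p) / r"
    have "-1 \<le> u" "u \<le> 1" "-1 \<le> v" "v \<le> 1" using z assms
      by (auto simp: u_def v_def field_simps)
    moreover have "z = r *\<^sub>R (u,v) + p" using assms
      by (auto simp: u_def v_def prod_eq_iff)
    ultimately show "z \<in> hsq r p" unfolding hsq_def std_square_def
      by (intro image_eqI[where x="(u,v)"]) auto
  qed
qed

lemma mem_hsq: "r > 0 \<Longrightarrow> z \<in> hsq r p \<longleftrightarrow> \<bar>fst z - fst p\<bar> \<le> r \<and> \<bar>snd z - snd p\<bar> \<le> r"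
  by (cases z) (auto simp: hsq_eq abs_le_iff)

lemma int_hsq: "r > 0 \<Longrightarrow> interior (hsq r p) = {fst p - r <..< fst p + r} \<times> {snd p - r <..< snd p + r}"
  by (simp add: hsq_eq interior_Times)

lemma mem_int_hsq: "r > 0 \<Longrightarrow> z \<in> interior (hsq r p) \<longleftrightarrow> \<bar>fst z - fst p\<bar> < r \<and> \<bar>snd z - snd p\<bar> < r"
  by (cases z) (auto simp: int_hsq abs_less_iff)

lemma hsq_closure: "r > 0 \<Longrightarrow> hsq r p \<subseteq> closure (interior (hsq r p))"
  by (simp add: int_hsq closure_Times hsq_eq interior_Times)

lemma closed_hsq: "r > 0 \<Longrightarrow> closed (hsq r p)"
  by (simp add: hsq_eq closed_Times)

lemma open_cover:
  fixes A B :: "'a::topological_space set"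
  assumes "open W" "W \<noteq> {}" "W \<subseteq> A \<union> B" "closed A" "closed B"
  shows "W \<inter> interior A \<noteq> {} \<or> W \<inter> interior B \<noteq> {}"
proof (cases "W - A = {}")
  case True
  then have "W \<subseteq> A" by (simp add: Diff_eq_empty_iff)
  then have "W \<subseteq> interior A" using assms(1) by (rule interior_maximal)
  then have "W \<inter> interior A = W" by (rule Int_absorb2)
  then show ?thesis using assms(2) by simp
next
  case False
  have "open (W - A)" using assms(1,4) by (rule open_Diff)
  moreover have "W - A \<subseteq> B" using assms(3) by (simp add: Diff_subset_conv)
  ultimately have "W - A \<subseteq> interior B" by (intro interior_maximal)
  obtain x where "x \<in> W - A" using False by auto
  then have "x \<in> W \<inter> interior B" using \<open>W - A \<subseteq> interior B\<close> by auto
  then show ?thesis by auto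
qed

lemma part1_aux:
  fixes A B E :: "'a::topological_space set"
  assumes "closed A" "closed B" "interior A \<inter> interior E = {}" "interior B \<inter> interior E = {}"
    "open U" "U \<subseteq> A \<union> B" "U \<inter> interior E \<noteq> {}"
  shows False
proof -
  have o: "open (U \<inter> interior E)" using assms(5) by (simp add: open_Int)
  have s: "U \<inter> interior E \<subseteq> A \<union> B" using assms(6) by (meson Int_lower1 subset_trans)
  have "U \<inter> interior E \<inter> interior A \<noteq> {} \<or> U \<inter> interior E \<inter> interior B \<noteq> {}"
    using open_cover[OF o assms(7) s assms(1,2)] .
  then show False using assms(3,4) by (metis Int_assoc Int_commute inf_bot_right)
qed

lemma part1:
  fixes A B C D :: "'a::topological_space set"
  assumes "closed A" "closed B" "closed C" "closed D"
    "interior A \<inter> interior C = {}" "interior A \<inter> interior D = {}"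
    "interior B \<inter> interior C = {}" "interior B \<inter> interior D = {}"
  shows "interior (A \<union> B) \<inter> interior (C \<union> D) = {}"
proof (rule ccontr)
  let ?U = "interior (A \<union> B) \<inter> interior (C \<union> D)"
  assume ne: "?U \<noteq> {}"
  have o: "open ?U" by (simp add: open_Int)
  have s1: "?U \<subseteq> C \<union> D" by (meson Int_lower2 interior_subset subset_trans)
  have s2: "?U \<subseteq> A \<union> B" by (meson Int_lower1 interior_subset subset_trans)
  have "?U \<inter> interior C \<noteq> {} \<or> ?U \<inter> interior D \<noteq> {}"
    using open_cover[OF o ne s1 assms(3,4)] .
  then show False
  proof
    assume "?U \<inter> interior C \<noteq> {}"
    then show False using part1_aux[OF assms(1,2,5,7) o s2] by simp
  next
    assume "?U \<inter> interior D \<noteq> {}"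
    then show False using part1_aux[OF assms(1,2,6,8) o s2] by simp
  qed
qed

lemma sep:
  assumes "ri > 0" "rj > 0" "interior (hsq ri a) \<inter> interior (hsq rj b) = {}"
  shows "ri + rj \<le> \<bar>fst a - fst b\<bar> \<or> ri + rj \<le> \<bar>snd a - snd b\<bar>"
proof (rule ccontr)
  assume "\<not> ?thesis"
  then have h1: "\<bar>fst b - fst a\<bar> < ri + rj" and h2: "\<bar>snd b - snd a\<bar> < ri + rj" by auto
  define R where "R = ri + rj"
  have R: "R > 0" using assms by (simp add: R_def)
  define z where "z = (fst a + ri * (fst b - fst a) / R, snd a + ri * (snd b - snd a) / R)"
  have key: "\<bar>ri * d / R\<bar> < ri \<and> \<bar>ri * d / R - d\<bar> < rj" if "\<bar>d\<bar> < R" for d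
  proof -
    have "\<bar>ri * d / R\<bar> = ri * (\<bar>d\<bar> / R)" using assms R by (simp add: abs_mult)
    also have "\<dots> < ri * 1" using that R assms by (intro mult_strict_left_mono) auto
    finally have A: "\<bar>ri * d / R\<bar> < ri" by simp
    have "ri * d / R - d = - (rj * d / R)" using R by (simp add: R_def field_simps)
    then have "\<bar>ri * d / R - d\<bar> = rj * (\<bar>d\<bar> / R)" using assms R by (simp add: abs_mult)
    also have "\<dots> < rj * 1" using that R assms by (intro mult_strict_left_mono) auto
    finally show ?thesis using A by simp
  qed
  have z1: "fst z - fst a = ri * (fst b - fst a) / R" "snd z - snd a = ri * (snd b - snd a) / R"
    by (simp_all add: z_def)
  have z2: "fst z - fst b = ri * (fst b - fst a) / R - (fst b - fst a)"
           "snd z - snd b = ri * (snd b - snd a) / R - (snd b - snd a)"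
    by (simp_all add: z_def)
  have "h1'": "\<bar>fst b - fst a\<bar> < R" and "h2'": "\<bar>snd b - snd a\<bar> < R"
    using h1 h2 by (simp_all add: R_def)
  have "z \<in> interior (hsq ri a)" "z \<in> interior (hsq rj b)"
    unfolding mem_int_hsq[OF assms(1)] mem_int_hsq[OF assms(2)] z1 z2
    using key[OF h1'] key[OF h2'] by simp_all
  then show False using assms by blast
qed

lemma touch:
  assumes "ri > 0" "rj > 0" "z \<in> hsq ri a" "z \<in> hsq rj b"
  shows "\<bar>fst a - fst b\<bar> \<le> ri + rj \<and> \<bar>snd a - snd b\<bar> \<le> ri + rj"
proof -
  have "\<bar>fst z - fst a\<bar> \<le> ri" "\<bar>snd z - snd a\<bar> \<le> ri" "\<bar>fst z - fst b\<bar> \<le> rj" "\<bar>snd z - snd b\<bar> \<le> rj"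
    using assms mem_hsq by blast+
  then show ?thesis by linarith
qed

lemma unit_sign: assumes "r > 0" "\<bar>x::real\<bar> = r" shows "x / r = 1 \<or> x / r = -1"
proof (cases "x \<ge> 0")
  case True then have "x = r" using assms by simp
  then show ?thesis using assms by simp
next
  case False then have "x = -r" using assms by simp
  then show ?thesis using assms by simp
qed

lemma corner_of:
  assumes "r > 0" "\<bar>fst q - fst a\<bar> = r" "\<bar>snd q - snd a\<bar> = r"
  shows "q \<in> corners r a"
proof -
  define s where "s = (fst q - fst a) / r"
  define t where "t = (snd q - snd a) / r"
  have "s \<in> {-1,1}" "t \<in> {-1,1}" unfolding s_def t_def
    using unit_sign[OF assms(1,2)] unit_sign[OF assms(1,3)] by auto
  moreover have "q = (fst a + s * r, snd a + t * r)" using assms by (auto simp: s_def t_def prod_eq_iff)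
  ultimately show ?thesis unfolding corners_def by blast
qed

lemma cover:
  fixes u v a1 a2 b1 b2 ri rj z1 z2 d :: real
  assumes "ri > 0" "rj > 0" "\<bar>u - a1\<bar> = ri" "\<bar>u - b1\<bar> = rj" "\<bar>a1 - b1\<bar> = ri + rj"
    "\<bar>v - a2\<bar> < ri" "\<bar>v - b2\<bar> < rj"
    "d = min (min ri rj) (min (ri - \<bar>v - a2\<bar>) (rj - \<bar>v - b2\<bar>))"
    "\<bar>z1 - u\<bar> < d" "\<bar>z2 - v\<bar> < d"
  shows "(\<bar>z1 - a1\<bar> \<le> ri \<and> \<bar>z2 - a2\<bar> \<le> ri) \<or> (\<bar>z1 - b1\<bar> \<le> rj \<and> \<bar>z2 - b2\<bar> \<le> rj)"
proof -
  have d: "d \<le> ri" "d \<le> rj" "d \<le> ri - \<bar>v - a2\<bar>" "d \<le> rj - \<bar>v - b2\<bar>" unfolding assms(8) by (simp_all add: min_le_iff_disj)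
  have A2: "\<bar>z2 - a2\<bar> \<le> ri" "\<bar>z2 - b2\<bar> \<le> rj" using d assms(10) by linarith+
  have "(a1 = u - ri \<and> b1 = u + rj) \<or> (a1 = u + ri \<and> b1 = u - rj)" using assms(1-5) by linarith
  then show ?thesis
  proof
    assume h: "a1 = u - ri \<and> b1 = u + rj"
    show ?thesis
    proof (cases "z1 \<le> u")
      case True then show ?thesis using h A2 d assms(9) by (simp add: abs_le_iff abs_less_iff)
    next
      case False then show ?thesis using h A2 d assms(9) by (simp add: abs_le_iff abs_less_iff)
    qed
  next
    assume h: "a1 = u + ri \<and> b1 = u - rj"
    show ?thesis
    proof (cases "z1 \<le> u")
      case True then show ?thesis using h A2 d assms(9) by (simp add: abs_le_iff abs_less_iff)
    next
      case False then show ?thesis using h A2 d assms(9) by (simp add: abs_le_iff abs_less_iff)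
    qed
  qed
qed

lemma interior_box_cover:
  assumes "ri > 0" "rj > 0" "d > 0"
    "\<And>z1 z2. \<bar>z1 - fst q\<bar> < d \<Longrightarrow> \<bar>z2 - snd q\<bar> < d \<Longrightarrow>
       (\<bar>z1 - fst a\<bar> \<le> ri \<and> \<bar>z2 - snd a\<bar> \<le> ri) \<or> (\<bar>z1 - fst b\<bar> \<le> rj \<and> \<bar>z2 - snd b\<bar> \<le> rj)"
  shows "q \<in> interior (hsq ri a \<union> hsq rj b)"
proof (rule interiorI)
  let ?O = "{fst q - d <..< fst q + d} \<times> {snd q - d <..< snd q + d}"
  show "open ?O" by (simp add: open_Times)
  show "q \<in> ?O" using assms by (cases q) auto
  show "?O \<subseteq> hsq ri a \<union> hsq rj b"
  proof
    fix z assume "z \<in> ?O"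
    then have "\<bar>fst z - fst q\<bar> < d" "\<bar>snd z - snd q\<bar> < d" by (auto simp: abs_less_iff)
    then show "z \<in> hsq ri a \<union> hsq rj b" using assms(4)[of "fst z" "snd z"] assms(1,2)
      by (auto simp: mem_hsq)
  qed
qed

lemma G:
  assumes ri: "ri > 0" and rj: "rj > 0"
    and c1: "\<bar>fst a - fst b\<bar> \<le> ri + rj" and c2: "\<bar>snd a - snd b\<bar> \<le> ri + rj"
    and sp: "ri + rj \<le> \<bar>fst a - fst b\<bar> \<or> ri + rj \<le> \<bar>snd a - snd b\<bar>"
    and qs: "q \<in> closed_segment a b"
  shows "q \<in> interior (hsq ri a \<union> hsq rj b) \<or>
    (\<bar>fst a - fst b\<bar> = ri + rj \<and> \<bar>snd a - snd b\<bar> = ri + rj \<and>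
     \<bar>fst q - fst a\<bar> = ri \<and> \<bar>snd q - snd a\<bar> = ri \<and> \<bar>fst q - fst b\<bar> = rj \<and> \<bar>snd q - snd b\<bar> = rj)"
proof -
  obtain t where t: "0 \<le> t" "t \<le> 1" "q = (1 - t) *\<^sub>R a + t *\<^sub>R b"
    using qs unfolding closed_segment_def by auto
  define R where "R = ri + rj"
  have R: "R > 0" using ri rj by (simp add: R_def)
  have qc: "fst q = (1 - t) * fst a + t * fst b" "snd q = (1 - t) * snd a + t * snd b"
    using t(3) by simp_all
  have qa: "\<bar>fst q - fst a\<bar> = t * \<bar>fst a - fst b\<bar>" "\<bar>snd q - snd a\<bar> = t * \<bar>snd a - snd b\<bar>"
  proof -
    have "fst q - fst a = t * (fst b - fst a)" "snd q - snd a = t * (snd b - snd a)"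
      using qc by (auto simp: algebra_simps)
    then show "\<bar>fst q - fst a\<bar> = t * \<bar>fst a - fst b\<bar>" "\<bar>snd q - snd a\<bar> = t * \<bar>snd a - snd b\<bar>"
      using t by (simp_all add: abs_mult abs_minus_commute)
  qed
  have qb: "\<bar>fst q - fst b\<bar> = (1 - t) * \<bar>fst a - fst b\<bar>" "\<bar>snd q - snd b\<bar> = (1 - t) * \<bar>snd a - snd b\<bar>"
  proof -
    have "fst q - fst b = (1 - t) * (fst a - fst b)" "snd q - snd b = (1 - t) * (snd a - snd b)"
      using qc by (auto simp: algebra_simps)
    then show "\<bar>fst q - fst b\<bar> = (1 - t) * \<bar>fst a - fst b\<bar>" "\<bar>snd q - snd b\<bar> = (1 - t) * \<bar>snd a - snd b\<bar>"
      using t by (simp_all add: abs_mult)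
  qed
  have le: "t * \<bar>fst a - fst b\<bar> \<le> t * R" "t * \<bar>snd a - snd b\<bar> \<le> t * R"
    "(1 - t) * \<bar>fst a - fst b\<bar> \<le> (1 - t) * R" "(1 - t) * \<bar>snd a - snd b\<bar> \<le> (1 - t) * R"
    using t c1 c2 by (simp_all add: R_def mult_left_mono)
  consider "t * R < ri" | "t * R > ri" | "t * R = ri" by linarith
  then show ?thesis
  proof cases
    case 1
    then have "q \<in> interior (hsq ri a)" using qa le ri by (simp add: mem_int_hsq)
    then show ?thesis by (meson UnCI interior_mono subsetD subsetI)
  next
    case 2
    then have "(1 - t) * R < rj" by (simp add: R_def algebra_simps)
    then have "q \<in> interior (hsq rj b)" using qb le rj by (simp add: mem_int_hsq)
    then show ?thesis by (meson UnCI interior_mono subsetD subsetI)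
  next
    case 3
    then have t1: "(1 - t) * R = rj" by (simp add: R_def algebra_simps)
    have tpos: "t > 0" using 3 ri R t(1) by (cases "t = 0") auto
    have tlt: "1 - t > 0" using t1 rj R t(2) by (cases "t = 1") auto
    have e1: "\<bar>fst q - fst a\<bar> = ri \<and> \<bar>fst q - fst b\<bar> = rj" if "\<bar>fst a - fst b\<bar> = R"
      using qa qb that 3 t1 by simp
    have e2: "\<bar>snd q - snd a\<bar> = ri \<and> \<bar>snd q - snd b\<bar> = rj" if "\<bar>snd a - snd b\<bar> = R"
      using qa qb that 3 t1 by simp
    have f1: "\<bar>fst q - fst a\<bar> < ri \<and> \<bar>fst q - fst b\<bar> < rj" if "\<bar>fst a - fst b\<bar> < R"
      using qa qb 3 t1 mult_strict_left_mono[OF that tpos] mult_strict_left_mono[OF that tlt] by simp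
    have f2: "\<bar>snd q - snd a\<bar> < ri \<and> \<bar>snd q - snd b\<bar> < rj" if "\<bar>snd a - snd b\<bar> < R"
      using qa qb 3 t1 mult_strict_left_mono[OF that tpos] mult_strict_left_mono[OF that tlt] by simp
    consider "\<bar>fst a - fst b\<bar> = R" "\<bar>snd a - snd b\<bar> = R"
      | "\<bar>fst a - fst b\<bar> = R" "\<bar>snd a - snd b\<bar> < R"
      | "\<bar>fst a - fst b\<bar> < R" "\<bar>snd a - snd b\<bar> = R"
      using c1 c2 sp unfolding R_def by linarith
    then show ?thesis
    proof cases
      case 1
      then show ?thesis using e1 e2 by (simp add: R_def)
    next
      case 2
      define d where "d = min (min ri rj) (min (ri - \<bar>snd q - snd a\<bar>) (rj - \<bar>snd q - snd b\<bar>))"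
      have "d > 0" using f2 2 ri rj by (simp add: d_def)
      have "q \<in> interior (hsq ri a \<union> hsq rj b)"
      proof (rule interior_box_cover[OF ri rj \<open>d > 0\<close>])
        fix z1 z2 assume "\<bar>z1 - fst q\<bar> < d" "\<bar>z2 - snd q\<bar> < d"
        then show "(\<bar>z1 - fst a\<bar> \<le> ri \<and> \<bar>z2 - snd a\<bar> \<le> ri) \<or> (\<bar>z1 - fst b\<bar> \<le> rj \<and> \<bar>z2 - snd b\<bar> \<le> rj)"
          using cover[OF ri rj, of "fst q" "fst a" "fst b" "snd q" "snd a" "snd b" d z1 z2]
            e1 f2 2 d_def unfolding R_def by blast
      qed
      then show ?thesis by simp
    next
      case 3
      define d where "d = min (min ri rj) (min (ri - \<bar>fst q - fst a\<bar>) (rj - \<bar>fst q - fst b\<bar>))"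
      have "d > 0" using f1 3 ri rj by (simp add: d_def)
      have "q \<in> interior (hsq ri a \<union> hsq rj b)"
      proof (rule interior_box_cover[OF ri rj \<open>d > 0\<close>])
        fix z1 z2 assume "\<bar>z1 - fst q\<bar> < d" "\<bar>z2 - snd q\<bar> < d"
        then show "(\<bar>z1 - fst a\<bar> \<le> ri \<and> \<bar>z2 - snd a\<bar> \<le> ri) \<or> (\<bar>z1 - fst b\<bar> \<le> rj \<and> \<bar>z2 - snd b\<bar> \<le> rj)"
          using cover[OF ri rj, of "snd q" "snd a" "snd b" "fst q" "fst a" "fst b" d z2 z1]
            e2 f1 3 d_def unfolding R_def by (metis abs_minus_commute)
      qed
      then show ?thesis by simp
    qed
  qed
qed

lemma conjTrue: "P \<Longrightarrow> (P \<and> A) = A" by simp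

lemma tri1: fixes q a c :: real shows "\<bar>a - c\<bar> \<le> \<bar>q - a\<bar> + \<bar>q - c\<bar>" by linarith

lemma oneD:
  fixes q a c e ri rk rl :: real
  assumes "ri > 0" "rk > 0" "rl > 0" "\<bar>q - a\<bar> = ri" "\<bar>q - c\<bar> = rk" "\<bar>a - c\<bar> = ri + rk"
    "\<bar>q - e\<bar> = rl" "\<bar>c - e\<bar> = rk + rl"
  shows "\<bar>a - e\<bar> < ri + rl"
proof -
  have "a = q - ri \<or> a = q + ri" "c = q - rk \<or> c = q + rk" "e = q - rl \<or> e = q + rl"
    using assms by linarith+
  then show ?thesis using assms by (elim disjE) (simp_all add: abs_if split: if_splits)
qed

lemma cross:
  fixes q1 q2 a1 a2 c1 c2 e1 e2 ri rk rl :: real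
  assumes "ri > 0" "rk > 0" "rl > 0"
    "\<bar>q1 - a1\<bar> = ri" "\<bar>q2 - a2\<bar> = ri" "\<bar>q1 - c1\<bar> = rk" "\<bar>q2 - c2\<bar> = rk"
    "\<bar>q1 - e1\<bar> = rl" "\<bar>q2 - e2\<bar> = rl" "\<bar>c1 - e1\<bar> = rk + rl" "\<bar>c2 - e2\<bar> = rk + rl"
    "ri + rk \<le> \<bar>a1 - c1\<bar> \<or> ri + rk \<le> \<bar>a2 - c2\<bar>"
    "ri + rl \<le> \<bar>a1 - e1\<bar> \<or> ri + rl \<le> \<bar>a2 - e2\<bar>"
  shows "(ri + rk = \<bar>a1 - c1\<bar> \<and> \<bar>a1 - c1\<bar> \<ge> \<bar>a2 - c2\<bar>) \<noteq>
         (ri + rk = \<bar>a2 - c2\<bar> \<and> \<bar>a2 - c2\<bar> \<ge> \<bar>a1 - c1\<bar>)"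
proof -
  have b1: "\<bar>a1 - c1\<bar> \<le> ri + rk" using tri1[of a1 c1 q1] assms(4,6) by linarith
  have b2: "\<bar>a2 - c2\<bar> \<le> ri + rk" using tri1[of a2 c2 q2] assms(5,7) by linarith
  have nb: "\<not> (\<bar>a1 - c1\<bar> = ri + rk \<and> \<bar>a2 - c2\<bar> = ri + rk)"
  proof
    assume h: "\<bar>a1 - c1\<bar> = ri + rk \<and> \<bar>a2 - c2\<bar> = ri + rk"
    have "\<bar>a1 - e1\<bar> < ri + rl" using oneD[OF assms(1-3,4,6) _ assms(8,10)] h by blast
    moreover have "\<bar>a2 - e2\<bar> < ri + rl" using oneD[OF assms(1-3,5,7) _ assms(9,11)] h by blast
    ultimately show False using assms(13) by linarith
  qed
  show ?thesis using b1 b2 nb assms(12) by linarith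
qed

lemma in_closure_int:
  assumes "rk > 0" "rl > 0" "q \<in> hsq rk c \<union> hsq rl e"
  shows "q \<in> closure (interior (hsq rk c \<union> hsq rl e))"
proof -
  have "interior (hsq rk c) \<subseteq> interior (hsq rk c \<union> hsq rl e)" by (rule interior_mono) (rule Un_upper1)
  then have "closure (interior (hsq rk c)) \<subseteq> closure (interior (hsq rk c \<union> hsq rl e))" by (rule closure_mono)
  then have 1: "hsq rk c \<subseteq> closure (interior (hsq rk c \<union> hsq rl e))"
    using hsq_closure[OF assms(1)] by (rule subset_trans[rotated])
  have "interior (hsq rl e) \<subseteq> interior (hsq rk c \<union> hsq rl e)" by (rule interior_mono) (rule Un_upper2)
  then have "closure (interior (hsq rl e)) \<subseteq> closure (interior (hsq rk c \<union> hsq rl e))" by (rule closure_mono)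
  then have 2: "hsq rl e \<subseteq> closure (interior (hsq rk c \<union> hsq rl e))"
    using hsq_closure[OF assms(2)] by (rule subset_trans[rotated])
  show ?thesis using assms(3) 1 2 by (meson UnE subsetD)
qed

lemma not_int:
  assumes "ri > 0" "rj > 0" "rk > 0" "rl > 0"
    "interior (hsq ri a \<union> hsq rj b) \<inter> interior (hsq rk c \<union> hsq rl e) = {}"
    "q \<in> hsq rk c \<union> hsq rl e"
  shows "q \<notin> interior (hsq ri a \<union> hsq rj b)"
proof
  assume h: "q \<in> interior (hsq ri a \<union> hsq rj b)"
  have "q \<in> closure (interior (hsq rk c \<union> hsq rl e))" using in_closure_int[OF assms(3,4,6)] .
  with h have "q \<in> interior (hsq ri a \<union> hsq rj b) \<inter> closure (interior (hsq rk c \<union> hsq rl e))" by (rule IntI)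
  then have "interior (hsq ri a \<union> hsq rj b) \<inter> closure (interior (hsq rk c \<union> hsq rl e)) \<noteq> {}" by blast
  then have "interior (hsq ri a \<union> hsq rj b) \<inter> interior (hsq rk c \<union> hsq rl e) \<noteq> {}"
    using open_Int_closure_eq_empty[OF open_interior, of "hsq ri a \<union> hsq rj b" "interior (hsq rk c \<union> hsq rl e)"]
    by (simp only: not_False_eq_True)
  then show False using assms(5) by (rule notE)
qed

theorem lemma12:
  fixes n :: nat and r :: "nat \<Rightarrow> real" and p :: "nat \<Rightarrow> real \<times> real" and i j k l :: nat
  assumes "homothetic_packing n r p"
    and "contact_edge n r p i j" and "contact_edge n r p k l"
    and "{i, j} \<inter> {k, l} = {}"
  shows "interior (hsq (r i) (p i) \<union> hsq (r j) (p j)) \<inter>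
           interior (hsq (r k) (p k) \<union> hsq (r l) (p l)) = {} \<and>
         (closed_segment (p i) (p j) \<inter> closed_segment (p k) (p l) \<noteq> {} \<longrightarrow>
           share_corner r p {i, j, k, l} \<and>
           edge_x n r p i j \<and> edge_y n r p i j \<and> edge_x n r p k l \<and> edge_y n r p k l \<and>
           (edge_x n r p i k \<noteq> edge_y n r p i k) \<and> (edge_x n r p i l \<noteq> edge_y n r p i l) \<and>
           (edge_x n r p j k \<noteq> edge_y n r p j k) \<and> (edge_x n r p j l \<noteq> edge_y n r p j l))"
proof -
  have idx: "i < n" "j < n" "k < n" "l < n" "i \<noteq> j" "k \<noteq> l"
    using assms(2,3) unfolding contact_edge_def by auto
  have dis: "i \<noteq> k" "i \<noteq> l" "j \<noteq> k" "j \<noteq> l" using assms(4) by auto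
  have pos: "r i > 0" "r j > 0" "r k > 0" "r l > 0" using assms(1) idx unfolding homothetic_packing_def by auto
  have D: "interior (hsq (r x) (p x)) \<inter> interior (hsq (r y) (p y)) = {}"
    if "x < n" "y < n" "x \<noteq> y" for x y using assms(1) that unfolding homothetic_packing_def by auto
  have P1: "interior (hsq (r i) (p i) \<union> hsq (r j) (p j)) \<inter>
           interior (hsq (r k) (p k) \<union> hsq (r l) (p l)) = {}"
    by (rule part1) (use closed_hsq pos D idx dis in auto)
  have P1': "interior (hsq (r k) (p k) \<union> hsq (r l) (p l)) \<inter>
           interior (hsq (r i) (p i) \<union> hsq (r j) (p j)) = {}" using P1 by blast
  show ?thesis
  proof (intro conjI impI)
    show "interior (hsq (r i) (p i) \<union> hsq (r j) (p j)) \<inter>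
           interior (hsq (r k) (p k) \<union> hsq (r l) (p l)) = {}" by (rule P1)
    assume "closed_segment (p i) (p j) \<inter> closed_segment (p k) (p l) \<noteq> {}"
    then obtain q where q1: "q \<in> closed_segment (p i) (p j)" and q2: "q \<in> closed_segment (p k) (p l)" by blast
    obtain z where "z \<in> hsq (r i) (p i)" "z \<in> hsq (r j) (p j)" using assms(2) unfolding contact_edge_def by blast
    then have tij: "\<bar>fst (p i) - fst (p j)\<bar> \<le> r i + r j \<and> \<bar>snd (p i) - snd (p j)\<bar> \<le> r i + r j"
      using touch pos by blast
    obtain w where "w \<in> hsq (r k) (p k)" "w \<in> hsq (r l) (p l)" using assms(3) unfolding contact_edge_def by blast
    then have tkl: "\<bar>fst (p k) - fst (p l)\<bar> \<le> r k + r l \<and> \<bar>snd (p k) - snd (p l)\<bar> \<le> r k + r l"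
      using touch pos by blast
    have sij: "r i + r j \<le> \<bar>fst (p i) - fst (p j)\<bar> \<or> r i + r j \<le> \<bar>snd (p i) - snd (p j)\<bar>"
      using sep[OF pos(1,2) D] idx by blast
    have skl: "r k + r l \<le> \<bar>fst (p k) - fst (p l)\<bar> \<or> r k + r l \<le> \<bar>snd (p k) - snd (p l)\<bar>"
      using sep[OF pos(3,4) D] idx by blast
    note Gij = G[OF pos(1,2) conjunct1[OF tij] conjunct2[OF tij] sij q1]
    note Gkl = G[OF pos(3,4) conjunct1[OF tkl] conjunct2[OF tkl] skl q2]
    have inij: "q \<in> hsq (r i) (p i) \<union> hsq (r j) (p j)"
      using Gij
    proof
      assume "q \<in> interior (hsq (r i) (p i) \<union> hsq (r j) (p j))"
      then show ?thesis using interior_subset by blast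
    next
      assume h: "\<bar>fst (p i) - fst (p j)\<bar> = r i + r j \<and> \<bar>snd (p i) - snd (p j)\<bar> = r i + r j \<and>
     \<bar>fst q - fst (p i)\<bar> = r i \<and> \<bar>snd q - snd (p i)\<bar> = r i \<and> \<bar>fst q - fst (p j)\<bar> = r j \<and> \<bar>snd q - snd (p j)\<bar> = r j"
      then have "q \<in> hsq (r i) (p i)" using mem_hsq[OF pos(1)] by simp
      then show ?thesis by (rule UnI1)
    qed
    have inkl: "q \<in> hsq (r k) (p k) \<union> hsq (r l) (p l)"
      using Gkl
    proof
      assume "q \<in> interior (hsq (r k) (p k) \<union> hsq (r l) (p l))"
      then show ?thesis using interior_subset by blast
    next
      assume h: "\<bar>fst (p k) - fst (p l)\<bar> = r k + r l \<and> \<bar>snd (p k) - snd (p l)\<bar> = r k + r l \<and>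
     \<bar>fst q - fst (p k)\<bar> = r k \<and> \<bar>snd q - snd (p k)\<bar> = r k \<and> \<bar>fst q - fst (p l)\<bar> = r l \<and> \<bar>snd q - snd (p l)\<bar> = r l"
      then have "q \<in> hsq (r k) (p k)" using mem_hsq[OF pos(3)] by simp
      then show ?thesis by (rule UnI1)
    qed
    have Cij: "\<bar>fst (p i) - fst (p j)\<bar> = r i + r j \<and> \<bar>snd (p i) - snd (p j)\<bar> = r i + r j \<and>
     \<bar>fst q - fst (p i)\<bar> = r i \<and> \<bar>snd q - snd (p i)\<bar> = r i \<and> \<bar>fst q - fst (p j)\<bar> = r j \<and> \<bar>snd q - snd (p j)\<bar> = r j"
      using Gij not_int[OF pos P1 inkl] by blast
    have Ckl: "\<bar>fst (p k) - fst (p l)\<bar> = r k + r l \<and> \<bar>snd (p k) - snd (p l)\<bar> = r k + r l \<and>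
     \<bar>fst q - fst (p k)\<bar> = r k \<and> \<bar>snd q - snd (p k)\<bar> = r k \<and> \<bar>fst q - fst (p l)\<bar> = r l \<and> \<bar>snd q - snd (p l)\<bar> = r l"
      using Gkl not_int[OF pos(3,4,1,2) P1' inij] by blast
    have inq: "q \<in> hsq (r x) (p x)" if "x \<in> {i,j,k,l}" for x
      using that Cij Ckl pos by (auto simp: mem_hsq)
    have ce: "contact_edge n r p x y" if "x \<in> {i,j,k,l}" "y \<in> {i,j,k,l}" "x \<noteq> y" for x y
      using that inq idx unfolding contact_edge_def by blast
    show "share_corner r p {i, j, k, l}" unfolding share_corner_def
    proof (rule exI[of _ q], intro ballI)
      fix x assume x: "x \<in> {i, j, k, l}"
      have "r x > 0" using pos x by blast
      moreover have "\<bar>fst q - fst (p x)\<bar> = r x \<and> \<bar>snd q - snd (p x)\<bar> = r x"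
        using x Cij Ckl by blast
      ultimately show "q \<in> corners (r x) (p x)" using corner_of by blast
    qed
    show "edge_x n r p i j" "edge_y n r p i j" "edge_x n r p k l" "edge_y n r p k l"
      unfolding edge_x_def edge_y_def using assms(2,3) Cij Ckl by simp_all
    have sx: "r x + r y \<le> \<bar>fst (p x) - fst (p y)\<bar> \<or> r x + r y \<le> \<bar>snd (p x) - snd (p y)\<bar>"
      if "x < n" "y < n" "x \<noteq> y" "r x > 0" "r y > 0" for x y
      using sep[OF that(4,5) D[OF that(1-3)]] .
    have Ckl': "\<bar>fst (p l) - fst (p k)\<bar> = r l + r k" "\<bar>snd (p l) - snd (p k)\<bar> = r l + r k"
      using Ckl by (simp_all add: abs_minus_commute add.commute)
    have sik: "r i + r k \<le> \<bar>fst (p i) - fst (p k)\<bar> \<or> r i + r k \<le> \<bar>snd (p i) - snd (p k)\<bar>"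
      by (rule sx) (use idx dis pos in auto)
    have sil: "r i + r l \<le> \<bar>fst (p i) - fst (p l)\<bar> \<or> r i + r l \<le> \<bar>snd (p i) - snd (p l)\<bar>"
      by (rule sx) (use idx dis pos in auto)
    have sjk: "r j + r k \<le> \<bar>fst (p j) - fst (p k)\<bar> \<or> r j + r k \<le> \<bar>snd (p j) - snd (p k)\<bar>"
      by (rule sx) (use idx dis pos in auto)
    have sjl: "r j + r l \<le> \<bar>fst (p j) - fst (p l)\<bar> \<or> r j + r l \<le> \<bar>snd (p j) - snd (p l)\<bar>"
      by (rule sx) (use idx dis pos in auto)
    have cik: "contact_edge n r p i k" "contact_edge n r p i l" "contact_edge n r p j k" "contact_edge n r p j l"
      using ce dis by simp_all
    show "edge_x n r p i k \<noteq> edge_y n r p i k"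
      unfolding edge_x_def edge_y_def conjTrue[OF cik(1)]
      by (rule cross[OF pos(1,3,4)]) (use Cij Ckl sik sil sjk sjl in blast)+
    show "edge_x n r p i l \<noteq> edge_y n r p i l"
      unfolding edge_x_def edge_y_def conjTrue[OF cik(2)]
      by (rule cross[OF pos(1,4,3)]) (use Cij Ckl Ckl' sik sil sjk sjl in blast)+
    show "edge_x n r p j k \<noteq> edge_y n r p j k"
      unfolding edge_x_def edge_y_def conjTrue[OF cik(3)]
      by (rule cross[OF pos(2,3,4)]) (use Cij Ckl sik sil sjk sjl in blast)+
    show "edge_x n r p j l \<noteq> edge_y n r p j l"
      unfolding edge_x_def edge_y_def conjTrue[OF cik(4)]
      by (rule cross[OF pos(2,4,3)]) (use Cij Ckl Ckl' sik sil sjk sjl in blast)+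
  qed
qed

end
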